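(* Let $A\subset\mathbb{C}^n$ be a set-germ at $0$ with $0\in\overline{A}$. Then $A$ satisfies condition (CSSP) if and only if $A$ satisfies condition (SSP) and $S^1D(A)=D(A)$, where $S^1=\{e^{i\theta}:\theta\in\mathbb{R}\}$. Consequently, if $A$ satisfies condition (SSP), then both $S^1A$ and $\mathbb{C}A$ satisfy condition (CSSP).
   Context: Identify $\mathbb{C}^n$ with $\mathbb{R}^{2n}$. For a set-germ $A$ at $0$ with $0\in\overline A$, $D(A)=\{a\in S^{2n-1}:\exists\, x_i\in A\setminus\{0\},\ x_i\to0,\ x_i/\|x_i\|\to a\}$, and the complex tangent cone is $LD^*(A)=\{v\in\mathbb{C}^n:\exists\, c_i\in\mathbb{C},\ \exists\, v_i\in A\setminus\{0\},\ v_i\to0,\ c_iv_i\to v\}$. For sequences, $\|u_m\|\ll\|v_m\|,\|w_m\|$ means $\|u_m\|/\|v_m\|\to0$ and $\|u_m\|/\|w_m\|\to0$. $A$ satisfies condition (SSP) if for every sequence $a_m\to0$ with $\lim a_m/\|a_m\|\in D(A)$ there is a sequence $b_m\in A$ with $\|a_m-b_m\|\ll\|a_m\|,\|b_m\|$. $A$ satisfies condition (CSSP) if for every sequence $a_m\in\mathbb{C}^n$ tending to $0$ with $\lim a_m/\|a_m\|\in LD^*(A)$ there is a sequence $b_m\in A$ with $\|a_m-b_m\|\ll\|a_m\|,\|b_m\|$. Here $S^1D(A)=\{ca: c\in S^1, a\in D(A)\}$, $S^1A=\{ca:c\in S^1,a\in A\}$, $\mathbb{C}A=\{ca:c\in\mathbb{C},a\in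 A\}$. *)

theory Defs
  imports "HOL-Analysis.Analysis"
begin

text \<open>We identify \<open>\<complex>^n\<close> with \<open>\<real>^{2n}\<close>: the norm on \<open>complex^'n\<close> is the Euclidean one.
  A set-germ at 0 is represented by a set (all notions below only depend on the germ).\<close>

definition D :: "(complex^'n) set \<Rightarrow> (complex^'n) set" where
  "D A = {a \<in> sphere 0 1. \<exists>x::nat \<Rightarrow> complex^'n.
            (\<forall>i. x i \<in> A - {0}) \<and> x \<longlonglongrightarrow> 0 \<and>
            (\<lambda>i. (1 / norm (x i)) *\<^sub>R x i) \<longlonglongrightarrow> a}"

definition LDstar :: "(complex^'n) set \<Rightarrow> (complex^'n) set" where
  "LDstar A = {v. \<exists>(c::nat \<Rightarrow> complex) (w::nat \<Rightarrow> complex^'n).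
            (\<forall>i. w i \<in> A - {0}) \<and> w \<longlonglongrightarrow> 0 \<and>
            (\<lambda>i. c i *s w i) \<longlonglongrightarrow> v}"

definition much_less :: "(nat \<Rightarrow> 'a::real_normed_vector) \<Rightarrow> (nat \<Rightarrow> 'b::real_normed_vector)
    \<Rightarrow> (nat \<Rightarrow> 'c::real_normed_vector) \<Rightarrow> bool" where
  "much_less u v w \<longleftrightarrow> (\<lambda>m. norm (u m) / norm (v m)) \<longlonglongrightarrow> 0 \<and>
                        (\<lambda>m. norm (u m) / norm (w m)) \<longlonglongrightarrow> 0"

text \<open>The sequences \<open>a_m\<close> are taken nonzero (implicit in \<open>a_m/\<parallel>a_m\<parallel>\<close>).\<close>
definition SSP :: "(complex^'n) set \<Rightarrow> bool" where
  "SSP A \<longleftrightarrow> (\<forall>a::nat \<Rightarrow> complex^'n. (\<forall>m. a m \<noteq> 0) \<and> a \<longlonglongrightarrow> 0 \<and>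
      (\<exists>l. (\<lambda>m. (1 / norm (a m)) *\<^sub>R a m) \<longlonglongrightarrow> l \<and> l \<in> D A) \<longrightarrow>
      (\<exists>b. (\<forall>m. b m \<in> A) \<and> much_less (\<lambda>m. a m - b m) a b))"

definition CSSP :: "(complex^'n) set \<Rightarrow> bool" where
  "CSSP A \<longleftrightarrow> (\<forall>a::nat \<Rightarrow> complex^'n. (\<forall>m. a m \<noteq> 0) \<and> a \<longlonglongrightarrow> 0 \<and>
      (\<exists>l. (\<lambda>m. (1 / norm (a m)) *\<^sub>R a m) \<longlonglongrightarrow> l \<and> l \<in> LDstar A) \<longrightarrow>
      (\<exists>b. (\<forall>m. b m \<in> A) \<and> much_less (\<lambda>m. a m - b m) a b))"

definition S1_mult :: "(complex^'n) set \<Rightarrow> (complex^'n) set" where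
  "S1_mult A = {c *s a | c a. cmod c = 1 \<and> a \<in> A}"

definition C_mult :: "(complex^'n) set \<Rightarrow> (complex^'n) set" where
  "C_mult A = {c *s a | c a. a \<in> A}"

end

theory Submission
  imports Defs
begin

lemma norm_smult: "norm (c *s (x::complex^'n)) = cmod c * norm x"
  unfolding norm_vec_def by (simp add: norm_mult L2_set_right_distrib)

lemma scaleR_smult: "r *\<^sub>R (x::complex^'n) = complex_of_real r *s x"
  by (simp add: vec_eq_iff del: scaleR_conv_of_real) (simp add: scaleR_conv_of_real)

lemma tendsto_smult:
  fixes f :: "nat \<Rightarrow> complex" and g :: "nat \<Rightarrow> complex^'n"
  assumes "f \<longlonglongrightarrow> c" "g \<longlonglongrightarrow> x"
  shows "(\<lambda>i. f i *s g i) \<longlonglongrightarrow> c *s x"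
  by (rule vec_tendstoI) (simp add: assms tendsto_mult tendsto_vec_nth)

lemma dir_close:
  fixes a b :: "complex^'n"
  assumes "a \<noteq> 0" "b \<noteq> 0"
  shows "norm ((1/norm a) *\<^sub>R a - (1/norm b) *\<^sub>R b) \<le> 2 * (norm (a - b) / norm a)"
proof -
  have e: "(1/norm a) *\<^sub>R a - (1/norm b) *\<^sub>R b = (1/norm a) *\<^sub>R (a - b) + (1/norm a - 1/norm b) *\<^sub>R b"
    by (simp add: algebra_simps)
  have n1: "norm ((1/norm a) *\<^sub>R (a - b)) = norm (a - b) / norm a" by simp
  have "norm ((1/norm a - 1/norm b) *\<^sub>R b) = \<bar>1/norm a - 1/norm b\<bar> * norm b" by simp
  also have "\<dots> = \<bar>norm b - norm a\<bar> / norm a" using assms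
    by (simp add: field_simps abs_div flip: abs_mult)
  also have "\<dots> \<le> norm (a - b) / norm a"
    by (intro divide_right_mono) (simp_all, metis norm_minus_commute norm_triangle_ineq3)
  finally have n2: "norm ((1/norm a - 1/norm b) *\<^sub>R b) \<le> norm (a - b) / norm a" .
  show ?thesis unfolding e using norm_triangle_ineq[of "(1/norm a) *\<^sub>R (a - b)" "(1/norm a - 1/norm b) *\<^sub>R b"] n1 n2
    by linarith
qed


lemma norm_dir: "(a::complex^'n) \<noteq> 0 \<Longrightarrow> norm ((1/norm a) *\<^sub>R a) = 1"
  by simp

lemma dir_lim_norm:
  fixes a :: "nat \<Rightarrow> complex^'n"
  assumes "\<forall>m. a m \<noteq> 0" "(\<lambda>m. (1 / norm (a m)) *\<^sub>R a m) \<longlonglongrightarrow> l"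
  shows "norm l = 1"
proof -
  have "(\<lambda>m. norm ((1 / norm (a m)) *\<^sub>R a m)) \<longlonglongrightarrow> norm l" using assms(2) by (rule tendsto_norm)
  moreover have "(\<lambda>m. norm ((1 / norm (a m)) *\<^sub>R a m)) = (\<lambda>m. 1)" using assms(1) by simp
  ultimately show ?thesis using LIMSEQ_unique tendsto_const by metis
qed

lemma L1:
  fixes A :: "(complex^'n) set"
  assumes "l \<in> LDstar A" "norm l = 1"
  shows "\<exists>\<theta> u. cmod \<theta> = 1 \<and> u \<in> D A \<and> l = \<theta> *s u"
proof -
  obtain c w where w: "\<forall>i. w i \<in> A - {0}" "w \<longlonglongrightarrow> 0" and cw: "(\<lambda>i. c i *s w i) \<longlonglongrightarrow> l"
    using assms(1) unfolding LDstar_def by blast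
  define p where "p i = (if c i = 0 then 1 else c i / cmod (c i), (1/norm (w i)) *\<^sub>R w i)" for i
  have pS: "p i \<in> sphere (0::complex) 1 \<times> sphere (0::complex^'n) 1" for i
    using w(1) by (auto simp: p_def norm_divide)
  have "seq_compact (sphere (0::complex) 1 \<times> sphere (0::complex^'n) 1)"
    by (intro compact_imp_seq_compact compact_Times compact_sphere)
  then obtain q r where q: "q \<in> sphere (0::complex) 1 \<times> sphere (0::complex^'n) 1"
     and r: "strict_mono r" and pr: "(p \<circ> r) \<longlonglongrightarrow> q"
    using pS by (metis seq_compactE)
  obtain \<theta> u where q': "q = (\<theta>, u)" by fastforce
  have th: "(\<lambda>i. fst (p (r i))) \<longlonglongrightarrow> \<theta>" using tendsto_fst[OF pr] q' by (simp add: o_def)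
  have uu: "(\<lambda>i. snd (p (r i))) \<longlonglongrightarrow> u" using tendsto_snd[OF pr] q' by (simp add: o_def)
  have nt: "cmod \<theta> = 1" using q q' by simp
  have uD: "u \<in> D A"
    unfolding D_def
  proof (intro CollectI conjI exI[of _ "w \<circ> r"])
    show "u \<in> sphere 0 1" using q q' by simp
    show "\<forall>i. (w \<circ> r) i \<in> A - {0}" using w by simp
    show "(w \<circ> r) \<longlonglongrightarrow> 0" using LIMSEQ_subseq_LIMSEQ[OF w(2) r] .
    show "(\<lambda>i. (1 / norm ((w \<circ> r) i)) *\<^sub>R (w \<circ> r) i) \<longlonglongrightarrow> u" using uu by (simp add: p_def)
  qed
  define y where "y i = c i *s w i" for i
  have yr: "(\<lambda>i. y (r i)) \<longlonglongrightarrow> l" using LIMSEQ_subseq_LIMSEQ[OF cw r] by (simp add: y_def o_def)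
  have l0: "l \<noteq> 0" using assms(2) by auto
  have ny: "(\<lambda>i. (1 / norm (y (r i))) *\<^sub>R y (r i)) \<longlonglongrightarrow> (1 / norm l) *\<^sub>R l"
    by (intro tendsto_intros yr) (use l0 in simp)
  have ev: "eventually (\<lambda>i. y (r i) \<noteq> 0) sequentially"
    using tendsto_imp_eventually_ne[OF yr l0] .
  have E: "eventually (\<lambda>i. (1 / norm (y (r i))) *\<^sub>R y (r i) = fst (p (r i)) *s snd (p (r i))) sequentially"
    using ev
  proof (rule eventually_mono)
    fix i assume "y (r i) \<noteq> 0"
    hence c0: "c (r i) \<noteq> 0" and w0: "w (r i) \<noteq> 0" by (auto simp: y_def)
    show "(1 / norm (y (r i))) *\<^sub>R y (r i) = fst (p (r i)) *s snd (p (r i))"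
      using c0 w0 by (simp add: y_def p_def norm_smult vec_eq_iff del: scaleR_conv_of_real)
         (simp add: scaleR_conv_of_real field_simps)
  qed
  have "(\<lambda>i. (1 / norm (y (r i))) *\<^sub>R y (r i)) \<longlonglongrightarrow> \<theta> *s u"
    using tendsto_cong[OF E] tendsto_smult[OF th uu] by simp
  hence "l = \<theta> *s u" using ny LIMSEQ_unique assms(2) by fastforce
  thus ?thesis using nt uD by blast
qed


lemma D_ex: "v \<in> D A \<Longrightarrow> \<exists>x. (\<forall>i. x i \<in> A - {0}) \<and> x \<longlonglongrightarrow> 0 \<and> (\<lambda>i. (1 / norm (x i)) *\<^sub>R x i) \<longlonglongrightarrow> v"
  unfolding D_def mem_Collect_eq by (rule conjunct2)

lemma D_sub: "D A \<subseteq> LDstar A"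
proof
  fix v assume "v \<in> D A"
  then obtain x where x: "\<forall>i. x i \<in> A - {0}" "x \<longlonglongrightarrow> 0" "(\<lambda>i. (1 / norm (x i)) *\<^sub>R x i) \<longlonglongrightarrow> v"
    using D_ex by blast
  have "(\<lambda>i. complex_of_real (1 / norm (x i)) *s x i) \<longlonglongrightarrow> v" using x(3) unfolding scaleR_smult .
  thus "v \<in> LDstar A" unfolding LDstar_def mem_Collect_eq
    using x(1,2) by (intro exI[of _ "\<lambda>i. complex_of_real (1 / norm (x i))"] exI[of _ x] conjI)
qed

lemma rot_LD:
  assumes "u \<in> D A"
  shows "\<theta> *s u \<in> LDstar A"
proof -
  obtain x where x: "\<forall>i. x i \<in> A - {0}" "x \<longlonglongrightarrow> 0" "(\<lambda>i. (1 / norm (x i)) *\<^sub>R x i) \<longlonglongrightarrow> u"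
    using D_ex[OF assms] by blast
  have "(\<lambda>i. \<theta> *s ((1 / norm (x i)) *\<^sub>R x i)) \<longlonglongrightarrow> \<theta> *s u"
    by (intro tendsto_smult tendsto_const x(3))
  hence "(\<lambda>i. (\<theta> * complex_of_real (1 / norm (x i))) *s x i) \<longlonglongrightarrow> \<theta> *s u"
    unfolding scaleR_smult vector_smult_assoc .
  thus ?thesis unfolding LDstar_def mem_Collect_eq
    using x(1,2) by (intro exI[of _ "\<lambda>i. \<theta> * complex_of_real (1 / norm (x i))"] exI[of _ x] conjI)
qed

lemma L3:
  fixes b :: "nat \<Rightarrow> complex^'n"
  assumes "b \<longlonglongrightarrow> 0" "eventually (\<lambda>m. b m \<in> A \<and> b m \<noteq> 0) sequentially"
    "(\<lambda>m. (1 / norm (b m)) *\<^sub>R b m) \<longlonglongrightarrow> v" "norm v = 1"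
  shows "v \<in> D A"
proof -
  obtain N where N: "\<And>m. m \<ge> N \<Longrightarrow> b m \<in> A \<and> b m \<noteq> 0" using assms(2) unfolding eventually_sequentially by blast
  show ?thesis unfolding D_def
  proof (intro CollectI conjI exI[of _ "\<lambda>i. b (i + N)"])
    show "v \<in> sphere 0 1" using assms(4) by simp
    show "\<forall>i. b (i + N) \<in> A - {0}" using N by simp
    show "(\<lambda>i. b (i + N)) \<longlonglongrightarrow> 0" using LIMSEQ_ignore_initial_segment[OF assms(1)] .
    show "(\<lambda>i. (1 / norm (b (i + N))) *\<^sub>R b (i + N)) \<longlonglongrightarrow> v"
      using LIMSEQ_ignore_initial_segment[OF assms(3), of N] .
  qed
qed

lemma much_less_dir:
  fixes a b :: "nat \<Rightarrow> complex^'n"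
  assumes a0: "\<forall>m. a m \<noteq> 0" and a: "a \<longlonglongrightarrow> 0" and ml: "much_less (\<lambda>m. a m - b m) a b"
    and al: "(\<lambda>m. (1 / norm (a m)) *\<^sub>R a m) \<longlonglongrightarrow> l"
  shows "b \<longlonglongrightarrow> 0" "eventually (\<lambda>m. b m \<noteq> 0) sequentially"
    "(\<lambda>m. (1 / norm (b m)) *\<^sub>R b m) \<longlonglongrightarrow> l"
proof -
  define \<rho> where "\<rho> m = norm (a m - b m) / norm (a m)" for m
  have \<rho>: "\<rho> \<longlonglongrightarrow> 0" using ml unfolding much_less_def \<rho>_def by simp
  have "eventually (\<lambda>m. \<rho> m < 1) sequentially"
    using \<rho> by (rule order_tendstoD) simp
  thus ev: "eventually (\<lambda>m. b m \<noteq> 0) sequentially"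
  proof (rule eventually_mono)
    fix m assume "\<rho> m < 1"
    show "b m \<noteq> 0"
    proof
      assume "b m = 0"
      hence "\<rho> m = 1" using a0 by (simp add: \<rho>_def)
      thus False using \<open>\<rho> m < 1\<close> by simp
    qed
  qed
  have "(\<lambda>m. \<rho> m * norm (a m)) \<longlonglongrightarrow> 0 * 0"
    by (intro tendsto_mult \<rho>) (use tendsto_norm[OF a] in simp)
  moreover have "(\<lambda>m. \<rho> m * norm (a m)) = (\<lambda>m. norm (a m - b m))" using a0 by (auto simp: \<rho>_def)
  ultimately have "(\<lambda>m. a m - b m) \<longlonglongrightarrow> 0" by (simp add: tendsto_norm_zero_iff)
  hence "(\<lambda>m. a m - (a m - b m)) \<longlonglongrightarrow> 0 - 0" by (intro tendsto_diff a)
  thus "b \<longlonglongrightarrow> 0" by simp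
  have "(\<lambda>m. (1 / norm (a m)) *\<^sub>R a m - (1 / norm (b m)) *\<^sub>R b m) \<longlonglongrightarrow> 0"
  proof (rule Lim_null_comparison)
    show "eventually (\<lambda>m. norm ((1 / norm (a m)) *\<^sub>R a m - (1 / norm (b m)) *\<^sub>R b m) \<le> 2 * \<rho> m) sequentially"
      using ev by (rule eventually_mono) (use dir_close[OF a0[rule_format]] in \<open>simp add: \<rho>_def\<close>)
    show "(\<lambda>m. 2 * \<rho> m) \<longlonglongrightarrow> 0" using tendsto_mult[OF tendsto_const \<rho>, of 2] by simp
  qed
  hence "(\<lambda>m. (1 / norm (a m)) *\<^sub>R a m - ((1 / norm (a m)) *\<^sub>R a m - (1 / norm (b m)) *\<^sub>R b m)) \<longlonglongrightarrow> l - 0"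
    by (intro tendsto_diff al)
  thus "(\<lambda>m. (1 / norm (b m)) *\<^sub>R b m) \<longlonglongrightarrow> l" by simp
qed


lemma LD_S1: "LDstar (S1_mult A) \<subseteq> LDstar A"
proof
  fix v assume "v \<in> LDstar (S1_mult A)"
  then obtain c w where w: "\<forall>i. w i \<in> S1_mult A - {0}" "w \<longlonglongrightarrow> 0" and cw: "(\<lambda>i. c i *s w i) \<longlonglongrightarrow> v"
    unfolding LDstar_def by blast
  have "\<forall>i. \<exists>p. w i = fst p *s snd p \<and> cmod (fst p) = 1 \<and> snd p \<in> A"
  proof
    fix i
    obtain t y where "w i = t *s y" "cmod t = 1" "y \<in> A" using w(1) unfolding S1_mult_def by blast
    thus "\<exists>p. w i = fst p *s snd p \<and> cmod (fst p) = 1 \<and> snd p \<in> A" by (intro exI[of _ "(t, y)"]) simp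
  qed
  then obtain P where P: "\<forall>i. w i = fst (P i) *s snd (P i) \<and> cmod (fst (P i)) = 1 \<and> snd (P i) \<in> A"
    by (rule choice[THEN exE])
  define \<theta> where "\<theta> i = fst (P i)" for i
  define x where "x i = snd (P i)" for i
  have tx: "w i = \<theta> i *s x i \<and> cmod (\<theta> i) = 1 \<and> x i \<in> A" for i using P unfolding \<theta>_def x_def by blast
  have x0: "x i \<in> A - {0}" for i using tx[of i] w(1) by auto
  have "norm (x i) = norm (w i)" for i using tx[of i] by (simp add: norm_smult)
  hence "(\<lambda>i. norm (x i)) = (\<lambda>i. norm (w i))" by simp
  hence "(\<lambda>i. norm (x i)) \<longlonglongrightarrow> 0" using tendsto_norm_zero[OF w(2)] by simp
  hence "x \<longlonglongrightarrow> 0" by (rule tendsto_norm_zero_cancel)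
  moreover have "(\<lambda>i. (c i * \<theta> i) *s x i) \<longlonglongrightarrow> v" using cw tx by (simp add: vector_smult_assoc)
  ultimately show "v \<in> LDstar A" unfolding LDstar_def mem_Collect_eq
    using x0 by (intro exI[of _ "\<lambda>i. c i * \<theta> i"] exI[of _ x] conjI) auto
qed

lemma approx_C:
  assumes "l \<in> LDstar (C_mult A)" "norm l = 1" "e > 0"
  shows "\<exists>k\<in>C_mult A. norm k = 1 \<and> norm (k - l) < e"
proof -
  obtain c w where w: "\<forall>i. w i \<in> C_mult A - {0}" and cw: "(\<lambda>i. c i *s w i) \<longlonglongrightarrow> l"
    using assms(1) unfolding LDstar_def by blast
  have "min (e/2) (1/2) > 0" using assms(3) by simp
  then obtain N where N: "dist (c N *s w N) l < min (e/2) (1/2)"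
    using cw[unfolded LIMSEQ_def] by blast
  define y where "y = c N *s w N"
  have yC: "y \<in> C_mult A"
  proof -
    obtain d x where "w N = d *s x" "x \<in> A" using w unfolding C_mult_def by blast
    thus ?thesis unfolding y_def C_mult_def by (auto simp: vector_smult_assoc)
  qed
  have dy: "norm (y - l) < min (e/2) (1/2)" using N by (simp add: y_def dist_norm)
  have tri: "\<bar>norm y - norm l\<bar> \<le> norm (y - l)" by (rule norm_triangle_ineq3)
  hence y0: "y \<noteq> 0" using dy assms(2) by auto
  define k where "k = (1 / norm y) *\<^sub>R y"
  have kC: "k \<in> C_mult A"
  proof -
    obtain d x where dx: "y = d *s x" "x \<in> A" using yC unfolding C_mult_def by blast
    have "k = (complex_of_real (1 / norm y) * d) *s x" unfolding k_def scaleR_smult dx(1) by (simp add: vector_smult_assoc)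
    thus ?thesis using dx(2) unfolding C_mult_def by blast
  qed
  have "k - y = (1 / norm y - 1) *\<^sub>R y" by (simp add: k_def algebra_simps)
  hence "norm (k - y) = \<bar>1 / norm y - 1\<bar> * norm y" by simp
  also have "\<dots> = \<bar>1 - norm y\<bar>" using y0 by (simp add: field_simps abs_mult[symmetric] del: abs_mult)
  also have "\<dots> \<le> norm (y - l)" using tri assms(2) by simp
  finally have "norm (k - l) \<le> 2 * norm (y - l)"
    using norm_triangle_ineq[of "k - y" "y - l"] by simp
  hence "norm (k - l) < e" using dy by simp
  moreover have "norm k = 1" using y0 by (simp add: k_def)
  ultimately show ?thesis using kC by blast
qed


lemma C_closed: "x \<in> C_mult A \<Longrightarrow> c *s x \<in> C_mult A"
proof -
  assume "x \<in> C_mult A"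
  then obtain d y where "x = d *s y" "y \<in> A" unfolding C_mult_def by blast
  hence "c *s x = (c * d) *s y" by (simp add: vector_smult_assoc)
  thus ?thesis using \<open>y \<in> A\<close> unfolding C_mult_def by blast
qed

lemma part1a:
  fixes A :: "(complex^'n) set"
  assumes C: "CSSP A"
  shows "SSP A" "S1_mult (D A) = D A"
proof -
  show "SSP A" unfolding SSP_def
  proof (intro allI impI)
    fix a :: "nat \<Rightarrow> complex^'n"
    assume "(\<forall>m. a m \<noteq> 0) \<and> a \<longlonglongrightarrow> 0 \<and> (\<exists>l. (\<lambda>m. (1 / norm (a m)) *\<^sub>R a m) \<longlonglongrightarrow> l \<and> l \<in> D A)"
    thus "\<exists>b. (\<forall>m. b m \<in> A) \<and> much_less (\<lambda>m. a m - b m) a b"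
      using C[unfolded CSSP_def, rule_format, of a] D_sub by blast
  qed
  show "S1_mult (D A) = D A"
  proof
    show "D A \<subseteq> S1_mult (D A)" unfolding S1_mult_def
    proof
      fix v assume "v \<in> D A"
      hence "v = 1 *s v \<and> cmod 1 = 1 \<and> v \<in> D A" by simp
      thus "v \<in> {c *s a |c a. cmod c = 1 \<and> a \<in> D A}" by blast
    qed
    show "S1_mult (D A) \<subseteq> D A"
    proof
      fix v assume "v \<in> S1_mult (D A)"
      then obtain \<theta> u where tu: "v = \<theta> *s u" "cmod \<theta> = 1" "u \<in> D A" unfolding S1_mult_def by blast
      have nu: "norm u = 1" using tu(3) unfolding D_def by simp
      have nv: "norm v = 1" using tu nu by (simp add: norm_smult)
      have vL: "v \<in> LDstar A" using rot_LD[OF tu(3)] tu(1) by simp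
      define a where "a m = (1 / real (Suc m)) *\<^sub>R v" for m
      have a0: "\<forall>m. a m \<noteq> 0" using nv by (auto simp: a_def)
      have "(\<lambda>m. 1 / real (Suc m)) \<longlonglongrightarrow> 0" using LIMSEQ_Suc[OF lim_1_over_n] by simp
      hence "(\<lambda>m. (1 / real (Suc m)) *\<^sub>R v) \<longlonglongrightarrow> 0 *\<^sub>R v" by (intro tendsto_scaleR tendsto_const)
      hence a: "a \<longlonglongrightarrow> 0" unfolding a_def[abs_def] by simp
      have an: "(\<lambda>m. (1 / norm (a m)) *\<^sub>R a m) = (\<lambda>m. v)" using nv by (simp add: a_def)
      hence al: "(\<lambda>m. (1 / norm (a m)) *\<^sub>R a m) \<longlonglongrightarrow> v" by simp
      obtain b where b: "\<forall>m. b m \<in> A" "much_less (\<lambda>m. a m - b m) a b"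
        using C[unfolded CSSP_def, rule_format, of a] a0 a al vL by blast
      note M = much_less_dir[OF a0 a b(2) al]
      show "v \<in> D A"
        by (rule L3[OF M(1) _ M(3) nv]) (use M(2) b(1) in \<open>simp\<close>)
    qed
  qed
qed

lemma part1b:
  fixes A :: "(complex^'n) set"
  assumes S: "SSP A" and E: "S1_mult (D A) = D A"
  shows "CSSP A"
  unfolding CSSP_def
proof (intro allI impI)
  fix a :: "nat \<Rightarrow> complex^'n"
  assume H: "(\<forall>m. a m \<noteq> 0) \<and> a \<longlonglongrightarrow> 0 \<and> (\<exists>l. (\<lambda>m. (1 / norm (a m)) *\<^sub>R a m) \<longlonglongrightarrow> l \<and> l \<in> LDstar A)"
  then obtain l where l: "(\<lambda>m. (1 / norm (a m)) *\<^sub>R a m) \<longlonglongrightarrow> l" "l \<in> LDstar A" by blast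
  have nl: "norm l = 1" using dir_lim_norm H l(1) by blast
  obtain \<theta> u where "cmod \<theta> = 1" "u \<in> D A" "l = \<theta> *s u" using L1[OF l(2) nl] by blast
  hence "l \<in> S1_mult (D A)" unfolding S1_mult_def by blast
  hence lD: "l \<in> D A" using E by simp
  have P: "(\<forall>m. a m \<noteq> 0) \<and> a \<longlonglongrightarrow> 0 \<and> (\<exists>l. (\<lambda>m. (1 / norm (a m)) *\<^sub>R a m) \<longlonglongrightarrow> l \<and> l \<in> D A)"
    using H l(1) lD by blast
  show "\<exists>b. (\<forall>m. b m \<in> A) \<and> much_less (\<lambda>m. a m - b m) a b"
    by (rule S[unfolded SSP_def, THEN spec, of a, THEN mp, OF P])
qed


lemma part2a:
  fixes A :: "(complex^'n) set"
  assumes S: "SSP A"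
  shows "CSSP (S1_mult A)"
  unfolding CSSP_def
proof (intro allI impI)
  fix a :: "nat \<Rightarrow> complex^'n"
  assume H: "(\<forall>m. a m \<noteq> 0) \<and> a \<longlonglongrightarrow> 0 \<and> (\<exists>l. (\<lambda>m. (1 / norm (a m)) *\<^sub>R a m) \<longlonglongrightarrow> l \<and> l \<in> LDstar (S1_mult A))"
  then obtain l where l: "(\<lambda>m. (1 / norm (a m)) *\<^sub>R a m) \<longlonglongrightarrow> l" "l \<in> LDstar (S1_mult A)" by blast
  have nl: "norm l = 1" using dir_lim_norm H l(1) by blast
  obtain \<phi> u where pu: "cmod \<phi> = 1" "u \<in> D A" "l = \<phi> *s u" using L1[OF _ nl] l(2) LD_S1 by (meson subsetD)
  have pc: "\<phi> * cnj \<phi> = 1" "cnj \<phi> * \<phi> = 1" using complex_norm_square[of \<phi>] pu(1) by (simp_all add: mult.commute)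
  define a' where "a' m = cnj \<phi> *s a m" for m
  have ncp: "cmod (cnj \<phi>) = 1" using pu(1) by simp
  have a'0: "\<forall>m. a' m \<noteq> 0" using H pc by (auto simp: a'_def)
  have "(\<lambda>m. cnj \<phi> *s a m) \<longlonglongrightarrow> cnj \<phi> *s 0" using H by (intro tendsto_smult tendsto_const) simp
  hence a': "a' \<longlonglongrightarrow> 0" unfolding a'_def[abs_def] by simp
  have eq: "(1 / norm (a' m)) *\<^sub>R a' m = cnj \<phi> *s ((1 / norm (a m)) *\<^sub>R a m)" for m
    by (simp add: a'_def norm_smult ncp pu(1) scaleR_smult vector_smult_assoc mult.commute)
  have "(\<lambda>m. cnj \<phi> *s ((1 / norm (a m)) *\<^sub>R a m)) \<longlonglongrightarrow> cnj \<phi> *s l"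
    by (intro tendsto_smult tendsto_const l(1))
  hence al': "(\<lambda>m. (1 / norm (a' m)) *\<^sub>R a' m) \<longlonglongrightarrow> u"
    using pu(3) pc by (simp add: eq vector_smult_assoc)
  have P: "(\<forall>m. a' m \<noteq> 0) \<and> a' \<longlonglongrightarrow> 0 \<and> (\<exists>l. (\<lambda>m. (1 / norm (a' m)) *\<^sub>R a' m) \<longlonglongrightarrow> l \<and> l \<in> D A)"
    using a'0 a' al' pu(2) by blast
  obtain b' where b': "\<forall>m. b' m \<in> A" "much_less (\<lambda>m. a' m - b' m) a' b'"
    using S[unfolded SSP_def, THEN spec, of a', THEN mp, OF P] by blast
  define b where "b m = \<phi> *s b' m" for m
  have bS: "\<forall>m. b m \<in> S1_mult A" using b'(1) pu(1) unfolding b_def S1_mult_def by blast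
  have aa: "a m = \<phi> *s a' m" for m by (simp add: a'_def vector_smult_assoc pc)
  have n1: "norm (a m - b m) = norm (a' m - b' m)" for m
    by (simp add: aa b_def norm_smult pu(1) flip: vector_ssub_ldistrib)
  have n2: "norm (a m) = norm (a' m)" "norm (b m) = norm (b' m)" for m
    by (simp_all add: aa b_def norm_smult pu(1))
  have ml: "much_less (\<lambda>m. a m - b m) a b" using b'(2) unfolding much_less_def n1 n2 .
  show "\<exists>b. (\<forall>m. b m \<in> S1_mult A) \<and> much_less (\<lambda>m. a m - b m) a b"
    by (rule exI[of _ b], rule conjI[OF bS ml])
qed

lemma part2b:
  fixes A :: "(complex^'n) set"
  shows "CSSP (C_mult A)"
  unfolding CSSP_def
proof (intro allI impI)
  fix a :: "nat \<Rightarrow> complex^'n"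
  assume H: "(\<forall>m. a m \<noteq> 0) \<and> a \<longlonglongrightarrow> 0 \<and> (\<exists>l. (\<lambda>m. (1 / norm (a m)) *\<^sub>R a m) \<longlonglongrightarrow> l \<and> l \<in> LDstar (C_mult A))"
  then obtain l where l: "(\<lambda>m. (1 / norm (a m)) *\<^sub>R a m) \<longlonglongrightarrow> l" "l \<in> LDstar (C_mult A)" by blast
  have nl: "norm l = 1" using dir_lim_norm H l(1) by blast
  have "\<forall>m. \<exists>k\<in>C_mult A. norm k = 1 \<and> norm (k - l) < 1 / real (Suc m)"
    using approx_C[OF l(2) nl] by simp
  then obtain k where k: "\<And>m. k m \<in> C_mult A \<and> norm (k m) = 1 \<and> norm (k m - l) < 1 / real (Suc m)"
    by metis
  define b where "b m = norm (a m) *\<^sub>R k m" for m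
  have bC: "\<forall>m. b m \<in> C_mult A" using k C_closed unfolding b_def scaleR_smult by blast
  define n where "n m = (1 / norm (a m)) *\<^sub>R a m" for m
  have a0: "a m \<noteq> 0" for m using H by blast
  have ab: "a m - b m = norm (a m) *\<^sub>R (n m - k m)" for m
    using a0[of m] by (simp add: b_def n_def algebra_simps)
  have nb: "norm (b m) = norm (a m)" for m using k[of m] by (simp add: b_def)
  have r: "norm (a m - b m) / norm (a m) = norm (n m - k m)" for m
    using a0[of m] by (simp add: ab)
  have "(\<lambda>m. norm (n m - k m)) \<longlonglongrightarrow> 0"
  proof (rule Lim_null_comparison)
    show "eventually (\<lambda>m. norm (norm (n m - k m)) \<le> norm (n m - l) + 1 / real (Suc m)) sequentially"
    proof (rule always_eventually, intro allI)
      fix m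
      have "norm (n m - k m) \<le> norm (n m - l) + norm (k m - l)"
        using norm_triangle_ineq4[of "n m - l" "k m - l"] by simp
      thus "norm (norm (n m - k m)) \<le> norm (n m - l) + 1 / real (Suc m)" using k[of m] by simp
    qed
    have "(\<lambda>m. n m - l) \<longlonglongrightarrow> 0" using l(1) unfolding n_def[abs_def] by (simp add: LIM_zero)
    hence "(\<lambda>m. norm (n m - l) + 1 / real (Suc m)) \<longlonglongrightarrow> 0 + 0"
      by (intro tendsto_add tendsto_norm_zero LIMSEQ_Suc[OF lim_1_over_n])
    thus "(\<lambda>m. norm (n m - l) + 1 / real (Suc m)) \<longlonglongrightarrow> 0" by simp
  qed
  hence ml: "much_less (\<lambda>m. a m - b m) a b" unfolding much_less_def r nb by simp
  show "\<exists>b. (\<forall>m. b m \<in> C_mult A) \<and> much_less (\<lambda>m. a m - b m) a b"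
    by (rule exI[of _ b], rule conjI[OF bC ml])
qed

theorem proposition2p41:
  fixes A :: "(complex^'n) set"
  assumes "0 \<in> closure A"
  shows "(CSSP A \<longleftrightarrow> SSP A \<and> S1_mult (D A) = D A) \<and>
         (SSP A \<longrightarrow> CSSP (S1_mult A) \<and> CSSP (C_mult A))"
proof (intro conjI impI)
  show "CSSP A = (SSP A \<and> S1_mult (D A) = D A)"
  proof
    assume "CSSP A" thus "SSP A \<and> S1_mult (D A) = D A" using part1a by blast
  next
    assume "SSP A \<and> S1_mult (D A) = D A" thus "CSSP A" using part1b by blast
  qed
next
  assume "SSP A" thus "CSSP (S1_mult A)" by (rule part2a)
next
  show "CSSP (C_mult A)" by (rule part2b)
qed

end
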